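(* Let $g:[0,1]\to\mathbb{R}$ and let $0<c_1<c_2<\dots<c_r<1$ ($r<\infty$) be points such that $g$ is twice differentiable with bounded second derivative on $[0,1]$ except at the points $c_j$, which are jump discontinuities at which both one-sided limits $g(c_j-)$, $g(c_j+)$ exist and are finite. (i) If $g$ is left-continuous at each $c_j$, then as $n\to\infty$ \[ \sum_{k=1}^{n-1} g\left(\frac kn\right)=n\int_0^1 g(x)\,dx-\frac{g(0)+g(1)}{2}+\sum_{j=1}^r\left(\{nc_j\}-\frac12\right)\left[g(c_j+)-g(c_j-)\right]+\mathcal{O}\left(\frac1n\right), \] where $\{x\}=x-\lfloor x\rfloor$. (ii) If $g$ is right-continuous at $c_j$, then the same formula holds with $\{nc_j\}$ replaced by $\{nc_j\}'$, where $\{x\}'=1+x-\lceil x\rceil$ (the fractional part of $x$, except that it equals $1$ when $x$ is an integer). *)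

theory Defs
  imports "HOL-Analysis.Analysis" "HOL-Library.Landau_Symbols"
begin

definition frac' :: "real \<Rightarrow> real" where
  "frac' x = 1 + x - real_of_int \<lceil>x\<rceil>"

end

theory Submission
  imports Defs
begin

lemma deriv_bound_interval:
  fixes f f' :: "real \<Rightarrow> real"
  assumes "a \<le> b"
    and "\<And>x. x \<in> {a..b} \<Longrightarrow> (f has_real_derivative f' x) (at x within {a..b})"
    and "\<And>x. x \<in> {a..b} \<Longrightarrow> \<bar>f' x\<bar> \<le> B"
  shows "\<bar>f b - f a\<bar> \<le> B * (b - a)"
proof -
  have "norm (f b - f a) \<le> B * norm (b - a)"
    by (rule field_differentiable_bound[of "{a..b}" f f' B]) (use assms in auto)
  thus ?thesis using assms(1) by simp
qed

lemma trap_lip: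
  fixes h H :: "real \<Rightarrow> real"
  assumes ab: "a \<le> b"
    and dH: "\<And>t. t \<in> {a..b} \<Longrightarrow> (H has_real_derivative h t) (at t within {a..b})"
    and lip: "\<And>x y. x \<in> {a..b} \<Longrightarrow> y \<in> {a..b} \<Longrightarrow> \<bar>h x - h y\<bar> \<le> L * \<bar>x - y\<bar>"
  shows "\<bar>(b - a) * (h a + h b) / 2 - (H b - H a)\<bar> \<le> L * (b - a)^2"
proof -
  define \<psi> where "\<psi> t = t * (h a + h b) / 2 - H t" for t
  have d: "(\<psi> has_real_derivative ((h a + h b) / 2 - h t)) (at t within {a..b})" if "t \<in> {a..b}" for t
    unfolding \<psi>_def using dH[OF that] by (auto intro!: derivative_eq_intros)
  have bd: "\<bar>(h a + h b) / 2 - h t\<bar> \<le> L * (b - a)" if t: "t \<in> {a..b}" for t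
  proof -
    have 1: "\<bar>h a - h t\<bar> \<le> L * \<bar>a - t\<bar>" using lip[of a t] t ab by auto
    have 2: "\<bar>h b - h t\<bar> \<le> L * \<bar>b - t\<bar>" using lip[of b t] t ab by auto
    have "\<bar>(h a + h b) / 2 - h t\<bar> \<le> (\<bar>h a - h t\<bar> + \<bar>h b - h t\<bar>) / 2" 
    proof -
      have e: "(h a + h b) / 2 - h t = ((h a - h t) + (h b - h t)) / 2" by (simp add: field_simps)
      show ?thesis unfolding e abs_divide using abs_triangle_ineq[of "h a - h t" "h b - h t"] by simp
    qed
    also have "\<dots> \<le> (L * \<bar>a - t\<bar> + L * \<bar>b - t\<bar>) / 2" using 1 2 by (intro divide_right_mono add_mono) auto
    also have "\<dots> = L * (b - a) / 2" proof -
      have "\<bar>a - t\<bar> = t - a" "\<bar>b - t\<bar> = b - t" using t by auto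
      thus ?thesis by (simp add: field_simps)
    qed
    also have "\<dots> \<le> L * (b - a)"
    proof -
      have "0 \<le> L * \<bar>a - b\<bar>" using lip[of a b] ab by (smt (verit) atLeastAtMost_iff)
      hence "0 \<le> L * (b - a)" using ab by simp
      thus ?thesis by linarith
    qed
    finally show ?thesis .
  qed
  have "\<bar>\<psi> b - \<psi> a\<bar> \<le> L * (b - a) * (b - a)"
    by (rule deriv_bound_interval[OF ab d bd])
  moreover have "\<psi> b - \<psi> a = (b - a) * (h a + h b) / 2 - (H b - H a)"
    unfolding \<psi>_def by (simp add: field_simps)
  moreover have "L * (b - a) * (b - a) = L * (b - a)^2" by (simp add: power2_eq_square)
  ultimately show ?thesis by simp
qed

lemma trap_smooth:
  fixes h h1 h2 H :: "real \<Rightarrow> real"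
  assumes ab: "a \<le> b"
    and dH: "\<And>t. t \<in> {a..b} \<Longrightarrow> (H has_real_derivative h t) (at t within {a..b})"
    and dh: "\<And>t. t \<in> {a..b} \<Longrightarrow> (h has_real_derivative h1 t) (at t within {a..b})"
    and dh1: "\<And>t. t \<in> {a..b} \<Longrightarrow> (h1 has_real_derivative h2 t) (at t within {a..b})"
    and M: "\<And>t. t \<in> {a..b} \<Longrightarrow> \<bar>h2 t\<bar> \<le> M"
  shows "\<bar>(b - a) * (h a + h b) / 2 - (H b - H a)\<bar> \<le> M * (b - a)^3"
proof -
  have M0: "0 \<le> M" using M[of a] ab by (smt (verit) atLeastAtMost_iff)
  define chi where "chi t = (h a - h t + (t - a) * h1 t) / 2" for t
  define phi where "phi t = (t - a) * (h a + h t) / 2 - (H t - H a)" for t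
  have dchi: "(chi has_real_derivative ((t - a) * h2 t / 2)) (at t within {a..b})" if "t \<in> {a..b}" for t
    unfolding chi_def using dh[OF that] dh1[OF that]
    by (auto intro!: derivative_eq_intros simp: field_simps)
  have chi_bd: "\<bar>chi t\<bar> \<le> M * (b - a) * (b - a)" if t: "t \<in> {a..b}" for t
  proof -
    have at: "a \<le> t" using t by auto
    have "\<bar>chi t - chi a\<bar> \<le> (M * (b - a)) * (t - a)"
    proof (rule deriv_bound_interval[OF at])
      fix x assume x: "x \<in> {a..t}"
      hence xab: "x \<in> {a..b}" using t by auto
      show "(chi has_real_derivative ((x - a) * h2 x / 2)) (at x within {a..t})"
        by (rule DERIV_subset[OF dchi[OF xab]]) (use t in auto)
      have "\<bar>(x - a) * h2 x / 2\<bar> = (x - a) * \<bar>h2 x\<bar> / 2" using x by (simp add: abs_mult)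
      also have "\<dots> \<le> (b - a) * M / 2"
        using x t M[OF xab] by (intro divide_right_mono mult_mono) auto
      also have "\<dots> \<le> M * (b - a)" using M0 ab by (simp add: field_simps mult_left_mono)
      finally show "\<bar>(x - a) * h2 x / 2\<bar> \<le> M * (b - a)" .
    qed
    moreover have "chi a = 0" unfolding chi_def by simp
    moreover have "(M * (b - a)) * (t - a) \<le> M * (b - a) * (b - a)"
      using t M0 ab by (intro mult_left_mono) auto
    ultimately show ?thesis by simp
  qed
  have dphi: "(phi has_real_derivative chi t) (at t within {a..b})" if "t \<in> {a..b}" for t
    unfolding phi_def chi_def using dh[OF that] dH[OF that]
    by (auto intro!: derivative_eq_intros simp: field_simps)
  have "\<bar>phi b - phi a\<bar> \<le> (M * (b - a) * (b - a)) * (b - a)"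
    by (rule deriv_bound_interval[OF ab dphi chi_bd])
  moreover have "phi b - phi a = (b - a) * (h a + h b) / 2 - (H b - H a)"
    unfolding phi_def by (simp add: field_simps)
  moreover have "(M * (b - a) * (b - a)) * (b - a) = M * (b - a)^3" by (simp add: power3_eq_cube)
  ultimately show ?thesis by simp
qed

lemma lip_aux:
  fixes h h1 :: "real \<Rightarrow> real"
  assumes C: "finite C" and hc: "continuous_on {0..1} h"
    and dh: "\<And>x. x \<in> {0..1} - C \<Longrightarrow> (h has_real_derivative h1 x) (at x within {0..1})"
    and B: "\<And>x. x \<in> {0..1} - C \<Longrightarrow> \<bar>h1 x\<bar> \<le> B"
    and x: "x \<in> {0..1}" and y: "y \<in> {0..1}" and xy: "x < y"
  shows "\<bar>h y - h x\<bar> \<le> B * (y - x)"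
proof -
  have "infinite {x<..<y}" using xy by simp
  hence "\<not> {x<..<y} \<subseteq> C" using C finite_subset by blast
  hence "{x<..<y} - C \<noteq> {}" by blast
  then obtain z where z: "z \<in> {x<..<y} - C" by blast
  hence "z \<in> {0..1} - C" using x y by auto
  hence "\<bar>h1 z\<bar> \<le> B" by (rule B)
  hence B0: "0 \<le> B" by linarith
  have "(h1 has_integral (h y - h x)) {x..y}"
  proof (rule fundamental_theorem_of_calculus_interior_strong[OF C])
    show "x \<le> y" using xy by simp
    show "continuous_on {x..y} h" by (rule continuous_on_subset[OF hc]) (use x y in auto)
    fix t assume t: "t \<in> {x<..<y} - C"
    hence t01: "t \<in> {0..1} - C" using x y by auto
    have "t \<in> interior {0..1::real}" using t x y by auto
    hence "at t within {0..1} = at t" by (rule at_within_interior)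
    thus "(h has_vector_derivative h1 t) (at t)"
      using dh[OF t01] by (simp add: has_real_derivative_iff_has_vector_derivative)
  qed
  hence "(h1 has_integral (h y - h x)) (cbox x y)" by simp
  hence "norm (h y - h x) \<le> B * Henstock_Kurzweil_Integration.content (cbox x y)"
    by (rule has_integral_bound_spike_finite[OF B0 C]) (use B x y in auto)
  thus ?thesis using xy by simp
qed

lemma lip_from_deriv:
  fixes h h1 :: "real \<Rightarrow> real"
  assumes C: "finite C" and hc: "continuous_on {0..1} h"
    and dh: "\<And>x. x \<in> {0..1} - C \<Longrightarrow> (h has_real_derivative h1 x) (at x within {0..1})"
    and B: "\<And>x. x \<in> {0..1} - C \<Longrightarrow> \<bar>h1 x\<bar> \<le> B"
    and x: "x \<in> {0..1}" and y: "y \<in> {0..1}"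
  shows "\<bar>h x - h y\<bar> \<le> B * \<bar>x - y\<bar>"
proof (cases x y rule: linorder_cases)
  case less
  thus ?thesis using lip_aux[OF C hc dh B x y less] by (simp add: abs_minus_commute)
next
  case equal thus ?thesis by simp
next
  case greater
  thus ?thesis using lip_aux[OF C hc dh B y x greater] by simp
qed

lemma deriv_bounded:
  fixes h1 h2 :: "real \<Rightarrow> real"
  assumes C: "finite C"
    and dh1: "\<And>x. x \<in> {0..1} - C \<Longrightarrow> (h1 has_real_derivative h2 x) (at x within {0..1})"
    and M: "\<And>x. x \<in> {0..1} - C \<Longrightarrow> \<bar>h2 x\<bar> \<le> M"
  shows "\<exists>B. \<forall>x\<in>{0..1} - C. \<bar>h1 x\<bar> \<le> B"
proof -
  define P where "P = (\<lambda>(l, r). (l + r) / 2) ` (insert 0 C \<times> insert 1 C)"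
  have finP: "finite P" unfolding P_def using C by auto
  have "\<bar>h1 x\<bar> \<le> \<bar>M\<bar> + (\<Sum>p\<in>P. \<bar>h1 p\<bar>)" if x: "x \<in> {0..1} - C" for x
  proof -
    define L where "L = Max (insert 0 {c\<in>C. c < x})"
    define R where "R = Min (insert 1 {c\<in>C. c > x})"
    have fL: "finite (insert 0 {c\<in>C. c < x})" and fR: "finite (insert 1 {c\<in>C. c > x})"
      using C by auto
    have L0: "0 \<le> L" unfolding L_def using fL by simp
    have Lx: "L \<le> x" unfolding L_def using fL x by (auto simp: Max_le_iff)
    have R1: "R \<le> 1" unfolding R_def using fR by simp
    have Rx: "x \<le> R" unfolding R_def using fR x by (auto simp: Min_ge_iff)
    have LC: "L \<in> insert 0 C" unfolding L_def using Max_in[OF fL] by auto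
    have RC: "R \<in> insert 1 C" unfolding R_def using Min_in[OF fR] by auto
    have zL: "z \<le> L" if "z \<in> C" "z < x" for z
      unfolding L_def using fL that by (auto intro: Max_ge)
    have zR: "R \<le> z" if "z \<in> C" "z > x" for z
      unfolding R_def using fR that by (auto intro: Min_le)
    have LR: "L < R"
    proof (rule ccontr)
      assume "\<not> L < R"
      hence "L = x" "R = x" using Lx Rx by auto
      hence "x = 0" "x = 1" using LC RC x by auto
      thus False by simp
    qed
    define m where "m = (L + R) / 2"
    have mP: "m \<in> P" unfolding P_def m_def using LC RC by auto
    define S where "S = {min x m .. max x m}"
    have SC: "z \<in> {0..1} - C" if z: "z \<in> S" for z
    proof -
      have "L < m" "m < R" unfolding m_def using LR by auto
      hence zLR: "L \<le> z" "z \<le> R" using z Lx Rx unfolding S_def by auto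
      hence "z \<in> {0..1}" using L0 R1 by auto
      moreover have "z \<notin> C"
      proof
        assume zC: "z \<in> C"
        have "z \<noteq> x" using zC x by auto
        show False
        proof (cases "z < x")
          case True
          hence "z = L" using zL[OF zC True] zLR by simp
          thus False using z \<open>L < m\<close> True Lx unfolding S_def by auto
        next
          case False
          hence "z > x" using \<open>z \<noteq> x\<close> by simp
          hence "R \<le> z" by (rule zR[OF zC])
      hence "z = R" using zLR by linarith
          thus False using z \<open>m < R\<close> \<open>z > x\<close> Rx unfolding S_def by auto
        qed
      qed
      ultimately show ?thesis by simp
    qed
    have "norm (h1 x - h1 m) \<le> M * norm (x - m)"
    proof (rule field_differentiable_bound[of S h1 h2 M])
      show "convex S" unfolding S_def by simp
      fix z assume z: "z \<in> S"
      show "(h1 has_field_derivative h2 z) (at z within S)"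
        by (rule DERIV_subset[OF dh1[OF SC[OF z]]]) (use SC in auto)
      show "norm (h2 z) \<le> M" using M[OF SC[OF z]] by simp
    next
      show "x \<in> S" "m \<in> S" unfolding S_def by auto
    qed
    hence 1: "\<bar>h1 x - h1 m\<bar> \<le> M * \<bar>x - m\<bar>" by simp
    have "m \<in> {0..1}" using SC[of m] unfolding S_def by auto
    hence "\<bar>x - m\<bar> \<le> 1" using x by auto
    hence "\<bar>M\<bar> * \<bar>x - m\<bar> \<le> \<bar>M\<bar> * 1" by (intro mult_left_mono) auto
    moreover have "M * \<bar>x - m\<bar> \<le> \<bar>M\<bar> * \<bar>x - m\<bar>" by (intro mult_right_mono) auto
    ultimately have "M * \<bar>x - m\<bar> \<le> \<bar>M\<bar>" by linarith
    moreover have "\<bar>h1 m\<bar> \<le> (\<Sum>p\<in>P. \<bar>h1 p\<bar>)"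
      by (rule member_le_sum[OF mP _ finP]) simp
    ultimately show ?thesis using 1 by linarith
  qed
  thus ?thesis by blast
qed

lemma count_le2:
  fixes n :: nat and x :: real
  shows "card {k\<in>{..<n}. real k \<le> x \<and> x \<le> real k + 1} \<le> 2"
proof -
  have "{k\<in>{..<n}. real k \<le> x \<and> x \<le> real k + 1} \<subseteq> {nat \<lfloor>x\<rfloor>, nat \<lfloor>x\<rfloor> - 1}"
  proof
    fix k assume "k \<in> {k\<in>{..<n}. real k \<le> x \<and> x \<le> real k + 1}"
    hence k: "real k \<le> x" "x \<le> real k + 1" by auto
    have "int k \<le> \<lfloor>x\<rfloor>" using k by (simp add: le_floor_iff)
    moreover have "\<lfloor>x\<rfloor> \<le> int k + 1" using k by (simp add: floor_le_iff)
    ultimately have "\<lfloor>x\<rfloor> = int k \<or> \<lfloor>x\<rfloor> = int k + 1" by linarith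
    thus "k \<in> {nat \<lfloor>x\<rfloor>, nat \<lfloor>x\<rfloor> - 1}" by auto
  qed
  hence "card {k\<in>{..<n}. real k \<le> x \<and> x \<le> real k + 1} \<le> card {nat \<lfloor>x\<rfloor>, nat \<lfloor>x\<rfloor> - 1}"
    by (intro card_mono) auto
  also have "\<dots> \<le> 2" by (simp add: card_insert_if)
  finally show ?thesis .
qed

lemma card_filter_sum:
  "finite A \<Longrightarrow> real (card {x\<in>A. P x}) = (\<Sum>x\<in>A. if P x then 1 else 0)"
  by (simp add: sum.inter_filter[symmetric])

lemma smooth_part:
  fixes h h1 h2 :: "real \<Rightarrow> real"
  assumes C: "finite C" and hc: "continuous_on {0..1} h"
    and dh: "\<And>x. x \<in> {0..1} - C \<Longrightarrow> (h has_real_derivative h1 x) (at x within {0..1})"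
    and dh1: "\<And>x. x \<in> {0..1} - C \<Longrightarrow> (h1 has_real_derivative h2 x) (at x within {0..1})"
    and M: "\<And>x. x \<in> {0..1} - C \<Longrightarrow> \<bar>h2 x\<bar> \<le> M"
  shows "\<exists>K. \<forall>n::nat. n \<ge> 1 \<longrightarrow>
    \<bar>(\<Sum>k=1..<n. h (real k / real n)) - (real n * integral {0..1} h - (h 0 + h 1) / 2)\<bar> \<le> K / real n"
proof -
  obtain B where B: "\<And>x. x \<in> {0..1} - C \<Longrightarrow> \<bar>h1 x\<bar> \<le> B"
    using deriv_bounded[OF C dh1 M] by blast
  have lip: "\<bar>h x - h y\<bar> \<le> B * \<bar>x - y\<bar>" if "x \<in> {0..1}" "y \<in> {0..1}" for x y
    by (rule lip_from_deriv[OF C hc dh B that])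
  define H where "H x = integral {0..x} h" for x
  have dH: "(H has_real_derivative h t) (at t within {0..1})" if "t \<in> {0..1}" for t
    unfolding H_def by (rule integral_has_real_derivative[OF hc that])
  have H0: "H 0 = 0" unfolding H_def by simp
  define K where "K = \<bar>M\<bar> + 2 * \<bar>B\<bar> * real (card C)"
  have "\<bar>(\<Sum>k=1..<n. h (real k / real n)) - (real n * integral {0..1} h - (h 0 + h 1) / 2)\<bar> \<le> K / real n"
    if n1: "n \<ge> 1" for n :: nat
  proof -
    define N where "N = real n"
    have N0: "N > 0" unfolding N_def using n1 by simp
    define f where "f k = real k / N" for k :: nat
    define E where "E k = (f (Suc k) - f k) * (h (f k) + h (f (Suc k))) / 2 - (H (f (Suc k)) - H (f k))" for k
    define S where "S = (\<Sum>k<n. h (f k))"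
    have f01: "f k \<in> {0..1}" if "k \<le> n" for k
      unfolding f_def N_def using that n1 by (auto simp: field_simps)
    have fn: "f n = 1" "f 0 = 0" unfolding f_def N_def using n1 by auto
    have dist: "f (Suc k) - f k = 1 / N" for k unfolding f_def by (simp add: add_divide_distrib)
    have s1: "(\<Sum>k=1..<n. h (f k)) = S - h 0"
    proof -
      have "{..<n} = insert 0 {1..<n}" using n1 by auto
      thus ?thesis unfolding S_def using fn by simp
    qed
    have s2: "(\<Sum>k<n. h (f (Suc k))) = S + h 1 - h 0"
    proof -
      have "(\<Sum>k<Suc n. h (f k)) = h (f 0) + (\<Sum>k<n. h (f (Suc k)))" by (rule sum.lessThan_Suc_shift)
      moreover have "(\<Sum>k<Suc n. h (f k)) = S + h (f n)" unfolding S_def by simp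
      ultimately show ?thesis using fn by simp
    qed
    have tel: "(\<Sum>k<n. H (f (Suc k)) - H (f k)) = H 1"
      using sum_lessThan_telescope[of "\<lambda>k. H (f k)" n] fn H0 by simp
    have sumE: "(\<Sum>k<n. E k) = (S + (S + h 1 - h 0)) / (2 * N) - H 1"
    proof -
      have "(\<Sum>k<n. E k) = (\<Sum>k<n. (h (f k) + h (f (Suc k))) / (2 * N)) - (\<Sum>k<n. H (f (Suc k)) - H (f k))"
        unfolding E_def dist by (simp add: sum_subtractf mult.commute)
      also have "(\<Sum>k<n. (h (f k) + h (f (Suc k))) / (2 * N)) = ((\<Sum>k<n. h (f k)) + (\<Sum>k<n. h (f (Suc k)))) / (2 * N)"
        by (simp add: sum_divide_distrib[symmetric] sum.distrib)
      finally show ?thesis using s2 tel unfolding S_def by simp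
    qed
    have ident: "(\<Sum>k=1..<n. h (real k / real n)) - (real n * integral {0..1} h - (h 0 + h 1) / 2) = N * (\<Sum>k<n. E k)"
    proof -
      have e1: "integral {0..1} h = H 1" unfolding H_def by simp
      have e2: "(\<Sum>k=1..<n. h (real k / N)) = S - h 0" using s1 unfolding f_def .
      have e3: "real n = N" unfolding N_def ..
      show ?thesis unfolding sumE e1 e3 e2 using N0 by (simp add: field_simps)
    qed
    define cnt where "cnt k = real (card {c\<in>C. c \<in> {f k .. f (Suc k)}})" for k
    have Ebd: "\<bar>E k\<bar> \<le> \<bar>M\<bar> / N^3 + \<bar>B\<bar> / N^2 * cnt k" if k: "k < n" for k
    proof -
      have ab: "f k \<le> f (Suc k)" unfolding f_def using N0 by (simp add: divide_right_mono)
      have sub: "{f k .. f (Suc k)} \<subseteq> {0..1}" using f01[of k] f01[of "Suc k"] k by auto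
      have cnt0: "0 \<le> cnt k" unfolding cnt_def by simp
      show ?thesis
      proof (cases "{f k .. f (Suc k)} \<inter> C = {}")
        case True
        have "\<bar>E k\<bar> \<le> M * (f (Suc k) - f k)^3"
          unfolding E_def
        proof (rule trap_smooth[OF ab])
          fix t assume t: "t \<in> {f k .. f (Suc k)}"
          hence t': "t \<in> {0..1} - C" using True sub by auto
          show "(H has_real_derivative h t) (at t within {f k .. f (Suc k)})"
            by (rule DERIV_subset[OF dH sub]) (use t' in auto)
          show "(h has_real_derivative h1 t) (at t within {f k .. f (Suc k)})"
            by (rule DERIV_subset[OF dh[OF t'] sub])
          show "(h1 has_real_derivative h2 t) (at t within {f k .. f (Suc k)})"
            by (rule DERIV_subset[OF dh1[OF t'] sub])
          show "\<bar>h2 t\<bar> \<le> M" by (rule M[OF t'])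
        qed
        also have "\<dots> = M / N^3" unfolding dist by (simp add: power_divide)
        also have "\<dots> \<le> \<bar>M\<bar> / N^3" using N0 by (intro divide_right_mono) auto
        finally show ?thesis using cnt0 N0 by (smt (verit) divide_nonneg_nonneg mult_nonneg_nonneg zero_le_power abs_ge_zero)
      next
        case False
        then obtain c where "c \<in> C" "c \<in> {f k .. f (Suc k)}" by blast
        hence "{c\<in>C. c \<in> {f k .. f (Suc k)}} \<noteq> {}" by blast
        moreover have "finite {c\<in>C. c \<in> {f k .. f (Suc k)}}" using C by simp
        ultimately have c1: "1 \<le> cnt k" unfolding cnt_def by (simp add: Suc_leI card_gt_0_iff)
        have "\<bar>E k\<bar> \<le> B * (f (Suc k) - f k)^2"
          unfolding E_def
        proof (rule trap_lip[OF ab])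
          fix t assume t: "t \<in> {f k .. f (Suc k)}"
          show "(H has_real_derivative h t) (at t within {f k .. f (Suc k)})"
            by (rule DERIV_subset[OF dH sub]) (use t sub in auto)
        next
          fix x y assume "x \<in> {f k .. f (Suc k)}" "y \<in> {f k .. f (Suc k)}"
          thus "\<bar>h x - h y\<bar> \<le> B * \<bar>x - y\<bar>" using lip sub by auto
        qed
        also have "\<dots> = B / N^2" unfolding dist by (simp add: power_divide)
        also have "\<dots> \<le> \<bar>B\<bar> / N^2 * 1" using N0 by (simp add: divide_right_mono)
        also have "\<dots> \<le> \<bar>B\<bar> / N^2 * cnt k" using c1 N0 by (intro mult_left_mono) auto
        finally show ?thesis using N0 by (smt (verit) divide_nonneg_nonneg zero_le_power abs_ge_zero)
      qed
    qed
    have cntsum: "(\<Sum>k<n. cnt k) \<le> 2 * real (card C)"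
    proof -
      have "(\<Sum>k<n. cnt k) = (\<Sum>k<n. \<Sum>c\<in>C. if c \<in> {f k .. f (Suc k)} then 1 else 0)"
        unfolding cnt_def using C by (simp add: card_filter_sum)
      also have "\<dots> = (\<Sum>c\<in>C. \<Sum>k<n. if c \<in> {f k .. f (Suc k)} then 1 else 0)"
        by (rule sum.swap)
      also have "\<dots> = (\<Sum>c\<in>C. real (card {k\<in>{..<n}. c \<in> {f k .. f (Suc k)}}))"
        by (intro sum.cong refl, subst card_filter_sum) auto
      also have "\<dots> \<le> (\<Sum>c\<in>C. 2)"
      proof (rule sum_mono)
        fix c assume "c \<in> C"
        have "{k\<in>{..<n}. c \<in> {f k .. f (Suc k)}} = {k\<in>{..<n}. real k \<le> N * c \<and> N * c \<le> real k + 1}"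
          unfolding f_def using N0 by (auto simp: field_simps)
        thus "real (card {k\<in>{..<n}. c \<in> {f k .. f (Suc k)}}) \<le> 2"
          using count_le2[of n "N * c"] by simp
      qed
      finally show ?thesis by simp
    qed
    have "\<bar>\<Sum>k<n. E k\<bar> \<le> (\<Sum>k<n. \<bar>M\<bar> / N^3 + \<bar>B\<bar> / N^2 * cnt k)"
      by (rule order_trans[OF sum_abs sum_mono]) (rule Ebd, simp)
    also have "\<dots> = N * (\<bar>M\<bar> / N^3) + \<bar>B\<bar> / N^2 * (\<Sum>k<n. cnt k)"
      by (simp add: sum.distrib sum_distrib_left N_def)
    also have "\<dots> \<le> N * (\<bar>M\<bar> / N^3) + \<bar>B\<bar> / N^2 * (2 * real (card C))"
      using cntsum N0 by (intro add_left_mono mult_left_mono) auto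
    also have "\<dots> = K / N^2" unfolding K_def using N0 by (simp add: field_simps power2_eq_square power3_eq_cube)
    finally have "\<bar>\<Sum>k<n. E k\<bar> \<le> K / N^2" .
    hence "N * \<bar>\<Sum>k<n. E k\<bar> \<le> N * (K / N^2)" using N0 by (intro mult_left_mono) auto
    also have "N * (K / N^2) = K / N" using N0 by (simp add: power2_eq_square)
    finally show ?thesis unfolding ident using N0 by (simp add: abs_mult N_def)
  qed
  thus ?thesis by blast
qed

definition stp :: "real \<Rightarrow> real \<Rightarrow> real \<Rightarrow> real \<Rightarrow> real" where
  "stp c v d x = (if x < c then 0 else if x = c then v else d)"

lemma stp_deriv:
  assumes "x \<noteq> c" "x \<in> S"
  shows "(stp c v d has_real_derivative 0) (at x within S)"
proof (cases "x < c")
  case True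
  show ?thesis
  proof (rule has_field_derivative_transform_within[of "\<lambda>_. 0" 0 x S "c - x"])
    show "((\<lambda>_. 0) has_real_derivative 0) (at x within S)" by simp
    fix y assume "dist y x < c - x"
    hence "y < c" by (simp add: dist_real_def abs_if split: if_splits)
    thus "0 = stp c v d y" by (simp add: stp_def)
  qed (use True assms in auto)
next
  case False
  hence xc: "x > c" using assms by simp
  show ?thesis
  proof (rule has_field_derivative_transform_within[of "\<lambda>_. d" 0 x S "x - c"])
    show "((\<lambda>_. d) has_real_derivative 0) (at x within S)" by simp
    fix y assume "dist y x < x - c"
    hence "y > c" by (simp add: dist_real_def abs_if split: if_splits)
    thus "d = stp c v d y" by (simp add: stp_def)
  qed (use xc assms in auto)
qed

lemma stp_isCont: "x \<noteq> c \<Longrightarrow> isCont (stp c v d) x"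
  using stp_deriv[of x c UNIV v d] DERIV_isCont by blast

lemma stp_left: "(stp c v d \<longlongrightarrow> 0) (at_left c)"
proof -
  have "eventually (\<lambda>x. x \<in> {c - 1<..<c}) (at_left c)" by (rule eventually_at_left_real) simp
  hence "eventually (\<lambda>x. stp c v d x = 0) (at_left c)"
    by (rule eventually_mono) (auto simp: stp_def)
  thus ?thesis by (rule tendsto_eventually)
qed

lemma stp_right: "(stp c v d \<longlongrightarrow> d) (at_right c)"
proof -
  have "eventually (\<lambda>x. x \<in> {c<..<c + 1}) (at_right c)" by (rule eventually_at_right_real) simp
  hence "eventually (\<lambda>x. stp c v d x = d) (at_right c)"
    by (rule eventually_mono) (auto simp: stp_def)
  thus ?thesis by (rule tendsto_eventually)
qed

lemma stp_integral:
  assumes "0 < c" "c < 1"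
  shows "(stp c v d has_integral d * (1 - c)) {0..1}"
proof -
  define F where "F x = d * max 0 (x - c)" for x
  have "(stp c v d has_integral (F 1 - F 0)) {0..1}"
  proof (rule fundamental_theorem_of_calculus_interior_strong[where S="{c}" and f=F and f'="stp c v d"])
    show "continuous_on {0..1} F" unfolding F_def by (intro continuous_intros)
    fix x assume x: "x \<in> {0<..<1} - {c}"
    have "(F has_real_derivative stp c v d x) (at x)"
    proof (cases "x < c")
      case True
      show ?thesis
      proof (rule has_field_derivative_transform_within[of "\<lambda>_. 0" _ x UNIV "c - x"])
        show "((\<lambda>_. 0) has_real_derivative stp c v d x) (at x)" using True by (simp add: stp_def)
        fix y assume "dist y x < c - x"
        hence "y < c" by (simp add: dist_real_def abs_if split: if_splits)
        thus "0 = F y" by (simp add: F_def)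
      qed (use True in auto)
    next
      case False
      hence xc: "x > c" using x by simp
      show ?thesis
      proof (rule has_field_derivative_transform_within[of "\<lambda>y. d * (y - c)" _ x UNIV "x - c"])
        show "((\<lambda>y. d * (y - c)) has_real_derivative stp c v d x) (at x)"
          using xc by (auto simp: stp_def intro!: derivative_eq_intros)
        fix y assume "dist y x < x - c"
        hence "y > c" by (simp add: dist_real_def abs_if split: if_splits)
        thus "d * (y - c) = F y" by (simp add: F_def)
      qed (use xc in auto)
    qed
    thus "(F has_vector_derivative stp c v d x) (at x)"
      by (simp add: has_real_derivative_iff_has_vector_derivative)
  qed auto
  moreover have "F 1 - F 0 = d * (1 - c)" unfolding F_def using assms by simp
  ultimately show ?thesis by simp
qed

lemma card_gt:
  fixes y :: real
  assumes "0 \<le> y" "y < real n"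
  shows "real (card {k\<in>{1..<n}. y < real k}) = real n - 1 - real_of_int \<lfloor>y\<rfloor>"
proof -
  have f0: "0 \<le> \<lfloor>y\<rfloor>" using assms by simp
  have fl: "\<lfloor>y\<rfloor> < int k \<longleftrightarrow> y < real k" for k :: nat
    by (simp add: floor_less_iff)
  have fn: "\<lfloor>y\<rfloor> < int n" using assms fl by blast
  have eq: "{k\<in>{1..<n}. y < real k} = {nat \<lfloor>y\<rfloor> + 1..<n}"
  proof (intro set_eqI iffI)
    fix k assume "k \<in> {k\<in>{1..<n}. y < real k}"
    hence "k < n" "\<lfloor>y\<rfloor> < int k" using fl by auto
    moreover have "nat \<lfloor>y\<rfloor> < k" using nat_less_iff[OF f0] \<open>\<lfloor>y\<rfloor> < int k\<close> by blast
    ultimately show "k \<in> {nat \<lfloor>y\<rfloor> + 1..<n}" by simp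
  next
    fix k assume "k \<in> {nat \<lfloor>y\<rfloor> + 1..<n}"
    hence "k < n" "\<lfloor>y\<rfloor> < int k" "1 \<le> k" using f0 by auto
    moreover have "y < real k" using fl[of k] \<open>\<lfloor>y\<rfloor> < int k\<close> by blast
    ultimately show "k \<in> {k\<in>{1..<n}. y < real k}" by simp
  qed
  have "nat \<lfloor>y\<rfloor> < n" using nat_less_iff[OF f0] fn by blast
  hence le: "Suc (nat \<lfloor>y\<rfloor>) \<le> n" by (rule Suc_leI)
  have r: "real (nat \<lfloor>y\<rfloor>) = real_of_int \<lfloor>y\<rfloor>" using f0 by simp
  show ?thesis unfolding eq using le r by (simp add: of_nat_diff)
qed

lemma card_ge:
  fixes y :: real
  assumes "0 < y" "y < real n"
  shows "real (card {k\<in>{1..<n}. y \<le> real k}) = real n - real_of_int \<lceil>y\<rceil>"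
proof -
  have cl: "\<lceil>y\<rceil> \<le> int k \<longleftrightarrow> y \<le> real k" for k :: nat
    by (simp add: ceiling_le_iff)
  have c0: "0 < \<lceil>y\<rceil>" using assms by simp
  have cn: "\<lceil>y\<rceil> \<le> int n" using assms cl by auto
  have eq: "{k\<in>{1..<n}. y \<le> real k} = {nat \<lceil>y\<rceil>..<n}"
  proof (intro set_eqI iffI)
    fix k assume "k \<in> {k\<in>{1..<n}. y \<le> real k}"
    hence "k < n" "\<lceil>y\<rceil> \<le> int k" using cl by auto
    moreover have "nat \<lceil>y\<rceil> \<le> k" using nat_le_iff \<open>\<lceil>y\<rceil> \<le> int k\<close> by blast
    ultimately show "k \<in> {nat \<lceil>y\<rceil>..<n}" by simp
  next
    fix k assume "k \<in> {nat \<lceil>y\<rceil>..<n}"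
    hence k1: "k < n" "nat \<lceil>y\<rceil> \<le> k" by auto
    have k2: "\<lceil>y\<rceil> \<le> int k" using nat_le_iff k1(2) by blast
    have "0 < nat \<lceil>y\<rceil>" using c0 by simp
    hence "1 \<le> k" using k1 by linarith
    note k1 k2 this
    moreover have "y \<le> real k" using cl[of k] \<open>\<lceil>y\<rceil> \<le> int k\<close> by blast
    ultimately show "k \<in> {k\<in>{1..<n}. y \<le> real k}" by simp
  qed
  have le: "nat \<lceil>y\<rceil> \<le> n" using cn nat_le_iff by blast
  have r: "real (nat \<lceil>y\<rceil>) = real_of_int \<lceil>y\<rceil>" using c0 by simp
  show ?thesis unfolding eq using le r by (simp add: of_nat_diff)
qed

lemma stp_sum_left:
  assumes "0 < c" "c < 1" "n \<ge> 1"
  shows "(\<Sum>k=1..<n. stp c 0 d (real k / real n)) = d * (real n - 1 - real_of_int \<lfloor>real n * c\<rfloor>)"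
proof -
  have "(\<Sum>k=1..<n. stp c 0 d (real k / real n)) = (\<Sum>k\<in>{1..<n}. if real n * c < real k then d else 0)"
    using assms by (intro sum.cong refl) (auto simp: stp_def field_simps)
  also have "\<dots> = d * real (card {k\<in>{1..<n}. real n * c < real k})"
    by (simp add: sum.inter_filter[symmetric])
  also have "\<dots> = d * (real n - 1 - real_of_int \<lfloor>real n * c\<rfloor>)"
    using assms by (subst card_gt) auto
  finally show ?thesis .
qed

lemma stp_sum_right:
  assumes "0 < c" "c < 1" "n \<ge> 1"
  shows "(\<Sum>k=1..<n. stp c d d (real k / real n)) = d * (real n - real_of_int \<lceil>real n * c\<rceil>)"
proof -
  have "(\<Sum>k=1..<n. stp c d d (real k / real n)) = (\<Sum>k\<in>{1..<n}. if real n * c \<le> real k then d else 0)"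
    using assms by (intro sum.cong refl) (auto simp: stp_def field_simps)
  also have "\<dots> = d * real (card {k\<in>{1..<n}. real n * c \<le> real k})"
    by (simp add: sum.inter_filter[symmetric])
  also have "\<dots> = d * (real n - real_of_int \<lceil>real n * c\<rceil>)"
    using assms by (subst card_ge) auto
  finally show ?thesis .
qed

lemma sum_if_split:
  assumes "finite A" "j \<in> A"
  shows "(\<Sum>i\<in>A. if i = j then a else f i) = a + (\<Sum>i\<in>A. if i = j then 0 else f i)"
proof -
  have "(\<Sum>i\<in>A. if i = j then a else f i) = (\<Sum>i\<in>A. (if i = j then 0 else f i) + (if i = j then a else 0))"
    by (rule sum.cong) auto
  also have "\<dots> = (\<Sum>i\<in>A. if i = j then 0 else f i) + a" using assms by (simp add: sum.distrib)
  finally show ?thesis by (simp add: add.commute)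
qed

theorem lemma2p2:
  fixes g :: "real \<Rightarrow> real" and c :: "nat \<Rightarrow> real" and r :: nat
    and gl gr :: "nat \<Rightarrow> real"
  assumes c_mono: "strict_mono_on {1..r} c"
    and c_range: "\<forall>j\<in>{1..r}. 0 < c j \<and> c j < 1"
    and smooth: "\<exists>g' g'' M. \<forall>x\<in>{0..1} - c ` {1..r}.
        (g has_real_derivative g' x) (at x within {0..1}) \<and>
        (g' has_real_derivative g'' x) (at x within {0..1}) \<and> \<bar>g'' x\<bar> \<le> M"
    and lim_left: "\<forall>j\<in>{1..r}. (g \<longlongrightarrow> gl j) (at_left (c j))"
    and lim_right: "\<forall>j\<in>{1..r}. (g \<longlongrightarrow> gr j) (at_right (c j))"
    and jump: "\<forall>j\<in>{1..r}. gl j \<noteq> gr j"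
  shows "((\<forall>j\<in>{1..r}. continuous (at_left (c j)) g) \<longrightarrow>
           (\<lambda>n::nat. (\<Sum>k=1..<n. g (real k / real n))
              - (real n * integral {0..1} g - (g 0 + g 1) / 2
                 + (\<Sum>j=1..r. (frac (real n * c j) - 1/2) * (gr j - gl j))))
           \<in> O(\<lambda>n. 1 / real n))
       \<and> ((\<forall>j\<in>{1..r}. continuous (at_right (c j)) g) \<longrightarrow>
           (\<lambda>n::nat. (\<Sum>k=1..<n. g (real k / real n))
              - (real n * integral {0..1} g - (g 0 + g 1) / 2
                 + (\<Sum>j=1..r. (frac' (real n * c j) - 1/2) * (gr j - gl j))))
           \<in> O(\<lambda>n. 1 / real n))"
proof -
  obtain g' g'' M where sm: "\<forall>x\<in>{0..1} - c ` {1..r}.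
        (g has_real_derivative g' x) (at x within {0..1}) \<and>
        (g' has_real_derivative g'' x) (at x within {0..1}) \<and> \<bar>g'' x\<bar> \<le> M"
    using smooth by blast
  define C where "C = c ` {1..r}"
  have finC: "finite C" unfolding C_def by simp
  have cinj: "i = j" if "i \<in> {1..r}" "j \<in> {1..r}" "c i = c j" for i j
  proof (rule ccontr)
    assume "i \<noteq> j"
    hence "i < j \<or> j < i" by arith
    thus False using strict_mono_onD[OF c_mono] that by fastforce
  qed
  define d where "d j = gr j - gl j" for j
  define s where "s j = stp (c j) (g (c j) - gl j) (d j)" for j
  define h where "h = (\<lambda>x. g x - (\<Sum>j\<in>{1..r}. s j x))"
  have g_eq: "g x = h x + (\<Sum>j\<in>{1..r}. s j x)" for x unfolding h_def by simp
  have xC: "x \<noteq> c j" if "x \<in> {0..1} - C" "j \<in> {1..r}" for x j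
    using that unfolding C_def by auto
  have dh: "(h has_real_derivative g' x) (at x within {0..1})" if x: "x \<in> {0..1} - C" for x
  proof -
    have "((\<lambda>x. \<Sum>j\<in>{1..r}. s j x) has_real_derivative (\<Sum>j\<in>{1..r}. 0)) (at x within {0..1})"
      by (rule DERIV_sum) (use x xC stp_deriv in \<open>auto simp: s_def\<close>)
    moreover have "(g has_real_derivative g' x) (at x within {0..1})" using sm x unfolding C_def by blast
    ultimately have "((\<lambda>x. g x - (\<Sum>j\<in>{1..r}. s j x)) has_real_derivative (g' x - 0)) (at x within {0..1})"
      by (intro DERIV_diff) auto
    thus ?thesis unfolding h_def by simp
  qed
  have dg': "(g' has_real_derivative g'' x) (at x within {0..1})" if "x \<in> {0..1} - C" for x
    using sm that unfolding C_def by blast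
  have Mb: "\<bar>g'' x\<bar> \<le> M" if "x \<in> {0..1} - C" for x
    using sm that unfolding C_def by blast
  have hcont_c: "isCont h (c j)" if j: "j \<in> {1..r}" for j
  proof -
    define R0 where "R0 = (\<Sum>i\<in>{1..r}. if i = j then 0 else s i (c j))"
    have ci: "isCont (s i) (c j)" if "i \<in> {1..r}" "i \<noteq> j" for i
      unfolding s_def by (rule stp_isCont) (use cinj that j in blast)
    have L: "((\<lambda>x. \<Sum>i\<in>{1..r}. s i x) \<longlongrightarrow> (\<Sum>i\<in>{1..r}. if i = j then 0 else s i (c j))) (at_left (c j))"
    proof (rule tendsto_sum)
      fix i assume i: "i \<in> {1..r}"
      show "(s i \<longlongrightarrow> (if i = j then 0 else s i (c j))) (at_left (c j))"
      proof (cases "i = j")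
        case True thus ?thesis unfolding s_def using stp_left by simp
      next
        case False
        hence "continuous (at_left (c j)) (s i)" using ci[OF i] continuous_at_split by blast
        thus ?thesis using False by (simp add: continuous_within)
      qed
    qed
    have R: "((\<lambda>x. \<Sum>i\<in>{1..r}. s i x) \<longlongrightarrow> (\<Sum>i\<in>{1..r}. if i = j then d j else s i (c j))) (at_right (c j))"
    proof (rule tendsto_sum)
      fix i assume i: "i \<in> {1..r}"
      show "(s i \<longlongrightarrow> (if i = j then d j else s i (c j))) (at_right (c j))"
      proof (cases "i = j")
        case True thus ?thesis unfolding s_def using stp_right by simp
      next
        case False
        hence "continuous (at_right (c j)) (s i)" using ci[OF i] continuous_at_split by blast
        thus ?thesis using False by (simp add: continuous_within)
      qed
    qed
    have e1: "(\<Sum>i\<in>{1..r}. if i = j then d j else s i (c j)) = d j + R0"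
      unfolding R0_def by (rule sum_if_split) (use j in auto)
    have e2: "(\<Sum>i\<in>{1..r}. s i (c j)) = (g (c j) - gl j) + R0"
    proof -
      have "(\<Sum>i\<in>{1..r}. s i (c j)) = (\<Sum>i\<in>{1..r}. if i = j then g (c j) - gl j else s i (c j))"
        by (rule sum.cong) (auto simp: s_def stp_def)
      also have "\<dots> = (g (c j) - gl j) + R0"
        unfolding R0_def by (rule sum_if_split) (use j in auto)
      finally show ?thesis .
    qed
    have hc: "h (c j) = gl j - R0" unfolding h_def using e2 by simp
    have "(h \<longlongrightarrow> gl j - R0) (at_left (c j))"
      unfolding h_def R0_def by (intro tendsto_diff L) (use lim_left j in auto)
    moreover have "(h \<longlongrightarrow> gr j - (d j + R0)) (at_right (c j))"
      unfolding h_def e1[symmetric] by (intro tendsto_diff R) (use lim_right j in auto)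
    moreover have "gr j - (d j + R0) = gl j - R0" unfolding d_def by simp
    ultimately have "(h \<longlongrightarrow> h (c j)) (at (c j))" unfolding hc by (intro filterlim_split_at) auto
    thus ?thesis by (simp add: isCont_def)
  qed
  have hcont: "continuous_on {0..1} h"
    unfolding continuous_on_eq_continuous_within
  proof
    fix x :: real assume x: "x \<in> {0..1}"
    show "continuous (at x within {0..1}) h"
    proof (cases "x \<in> C")
      case True
      then obtain j where "j \<in> {1..r}" "x = c j" unfolding C_def by auto
      thus ?thesis using hcont_c continuous_at_imp_continuous_at_within by blast
    next
      case False
      thus ?thesis using dh[of x] x DERIV_continuous by blast
    qed
  qed
  obtain K where K: "\<forall>n::nat. n \<ge> 1 \<longrightarrow>
    \<bar>(\<Sum>k=1..<n. h (real k / real n)) - (real n * integral {0..1} h - (h 0 + h 1) / 2)\<bar> \<le> K / real n"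
    using smooth_part[OF finC hcont dh dg' Mb] by blast
  have sint: "(s j has_integral d j * (1 - c j)) {0..1}" if "j \<in> {1..r}" for j
    unfolding s_def by (rule stp_integral) (use c_range that in auto)
  have "((\<lambda>x. h x + (\<Sum>j\<in>{1..r}. s j x)) has_integral (integral {0..1} h + (\<Sum>j\<in>{1..r}. d j * (1 - c j)))) {0..1}"
    by (intro has_integral_add has_integral_sum integrable_integral integrable_continuous_real hcont sint) auto
  hence intg: "integral {0..1} g = integral {0..1} h + (\<Sum>j\<in>{1..r}. d j * (1 - c j))"
    unfolding g_eq[abs_def] by (rule integral_unique)
  have g0: "g 0 = h 0"
  proof -
    have "s j 0 = 0" if "j \<in> {1..r}" for j using c_range that by (auto simp: s_def stp_def)
    thus ?thesis unfolding g_eq by simp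
  qed
  have g1: "g 1 = h 1 + (\<Sum>j\<in>{1..r}. d j)"
  proof -
    have "s j 1 = d j" if "j \<in> {1..r}" for j
    proof -
      have "c j < 1" using c_range that by auto
      thus ?thesis by (simp add: s_def stp_def)
    qed
    thus ?thesis unfolding g_eq by simp
  qed
  have gsum: "(\<Sum>k=1..<n. g (real k / real n)) = (\<Sum>k=1..<n. h (real k / real n)) + (\<Sum>j\<in>{1..r}. \<Sum>k=1..<n. s j (real k / real n))" for n :: nat
    unfolding g_eq by (simp add: sum.distrib) (rule sum.swap)
  have gen: "(\<lambda>n::nat. (\<Sum>k=1..<n. g (real k / real n))
              - (real n * integral {0..1} g - (g 0 + g 1) / 2
                 + (\<Sum>j=1..r. (F n j - 1/2) * (gr j - gl j))))
           \<in> O(\<lambda>n. 1 / real n)"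
    if FF: "\<And>n j. n \<ge> 1 \<Longrightarrow> j \<in> {1..r} \<Longrightarrow>
      (\<Sum>k=1..<n. s j (real k / real n)) = real n * d j * (1 - c j) - d j / 2 + (F n j - 1/2) * d j"
    for F :: "nat \<Rightarrow> nat \<Rightarrow> real"
  proof (rule bigoI)
    show "eventually (\<lambda>n. norm ((\<Sum>k=1..<n. g (real k / real n))
              - (real n * integral {0..1} g - (g 0 + g 1) / 2
                 + (\<Sum>j=1..r. (F n j - 1/2) * (gr j - gl j)))) \<le> K * norm (1 / real n)) at_top"
      using eventually_ge_at_top[of "1::nat"]
    proof (rule eventually_mono)
      fix n :: nat assume n: "1 \<le> n"
      have "(\<Sum>k=1..<n. g (real k / real n))
              - (real n * integral {0..1} g - (g 0 + g 1) / 2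
                 + (\<Sum>j=1..r. (F n j - 1/2) * (gr j - gl j)))
            = ((\<Sum>k=1..<n. h (real k / real n)) - (real n * integral {0..1} h - (h 0 + h 1) / 2))
              + (\<Sum>j\<in>{1..r}. (\<Sum>k=1..<n. s j (real k / real n)) - real n * d j * (1 - c j) + d j / 2
                    - (F n j - 1/2) * d j)"
      proof -
        have dd: "(\<Sum>j=1..r. (F n j - 1/2) * (gr j - gl j)) = (\<Sum>j=1..r. (F n j - 1/2) * d j)"
          unfolding d_def ..
        have s2: "(\<Sum>j\<in>{1..r}. d j) / 2 = (\<Sum>j\<in>{1..r}. d j / 2)" by (rule sum_divide_distrib)
        have s3: "real n * (\<Sum>j\<in>{1..r}. d j * (1 - c j)) = (\<Sum>j\<in>{1..r}. real n * d j * (1 - c j))"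
          by (simp add: sum_distrib_left mult.assoc)
        show ?thesis unfolding gsum intg g0 g1 dd
          using s2 s3 by (simp add: sum.distrib sum_subtractf algebra_simps)
      qed
      also have "(\<Sum>j\<in>{1..r}. (\<Sum>k=1..<n. s j (real k / real n)) - real n * d j * (1 - c j) + d j / 2
                    - (F n j - 1/2) * d j) = 0"
        by (rule sum.neutral) (use FF n in auto)
      finally have eq: "(\<Sum>k=1..<n. g (real k / real n))
              - (real n * integral {0..1} g - (g 0 + g 1) / 2
                 + (\<Sum>j=1..r. (F n j - 1/2) * (gr j - gl j)))
            = (\<Sum>k=1..<n. h (real k / real n)) - (real n * integral {0..1} h - (h 0 + h 1) / 2)"
        by simp
      show "norm ((\<Sum>k=1..<n. g (real k / real n))
              - (real n * integral {0..1} g - (g 0 + g 1) / 2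
                 + (\<Sum>j=1..r. (F n j - 1/2) * (gr j - gl j)))) \<le> K * norm (1 / real n)"
        unfolding eq using K n by simp
    qed
  qed
  show ?thesis
  proof (intro conjI impI)
    assume lc: "\<forall>j\<in>{1..r}. continuous (at_left (c j)) g"
    show "(\<lambda>n::nat. (\<Sum>k=1..<n. g (real k / real n))
              - (real n * integral {0..1} g - (g 0 + g 1) / 2
                 + (\<Sum>j=1..r. (frac (real n * c j) - 1/2) * (gr j - gl j))))
           \<in> O(\<lambda>n. 1 / real n)"
    proof (rule gen)
      fix n j :: nat assume n: "n \<ge> 1" and j: "j \<in> {1..r}"
      have "(g \<longlongrightarrow> g (c j)) (at_left (c j))" using lc j by (simp add: continuous_within)
      hence gc: "g (c j) = gl j" using lim_left j tendsto_unique trivial_limit_at_left_real by blast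
      have "(\<Sum>k=1..<n. s j (real k / real n)) = d j * (real n - 1 - real_of_int \<lfloor>real n * c j\<rfloor>)"
        unfolding s_def gc using stp_sum_left c_range j n by simp
      thus "(\<Sum>k=1..<n. s j (real k / real n)) = real n * d j * (1 - c j) - d j / 2 + (frac (real n * c j) - 1/2) * d j"
        by (simp add: frac_def algebra_simps)
    qed
  next
    assume rc: "\<forall>j\<in>{1..r}. continuous (at_right (c j)) g"
    show "(\<lambda>n::nat. (\<Sum>k=1..<n. g (real k / real n))
              - (real n * integral {0..1} g - (g 0 + g 1) / 2
                 + (\<Sum>j=1..r. (frac' (real n * c j) - 1/2) * (gr j - gl j))))
           \<in> O(\<lambda>n. 1 / real n)"
    proof (rule gen)
      fix n j :: nat assume n: "n \<ge> 1" and j: "j \<in> {1..r}"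
      have "(g \<longlongrightarrow> g (c j)) (at_right (c j))" using rc j by (simp add: continuous_within)
      hence gc: "g (c j) = gr j" using lim_right j tendsto_unique trivial_limit_at_right_real by blast
      have sd: "g (c j) - gl j = d j" unfolding d_def gc ..
      have "(\<Sum>k=1..<n. s j (real k / real n)) = d j * (real n - real_of_int \<lceil>real n * c j\<rceil>)"
        unfolding s_def sd using stp_sum_right c_range j n by simp
      thus "(\<Sum>k=1..<n. s j (real k / real n)) = real n * d j * (1 - c j) - d j / 2 + (frac' (real n * c j) - 1/2) * d j"
        by (simp add: frac'_def algebra_simps)
    qed
  qed
qed

end
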